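(* Let $\mathcal X$ be finite with $|\mathcal X|\ge2$, $\mu\in\mathbb R^{\mathcal X}$, $\sigma\in(0,\infty)^{\mathcal X}$. On the probability simplex $\Delta(\mathcal X)$ define $$\mathcal W(p):=\sum_{x\in\mathcal X}p_x\Big(\mu_x+\sqrt{2\tilde I(p_x)}\,\sigma_x\Big)=\sum_{x\in\mathcal X}\big(p_x\mu_x+\phi(\Phi^{-1}(p_x))\,\sigma_x\big),$$ with the convention $\phi(\Phi^{-1}(0))=\phi(\Phi^{-1}(1))=0$. Then $\mathcal W$ is strictly concave on $\Delta(\mathcal X)$ and its unique maximizer over $\Delta(\mathcal X)$ is $q$ with $q_x=\Phi\big(\frac{\mu_x-\kappa^*}{\sigma_x}\big)$, where $\kappa^*\in\mathbb R$ is such that $\sum_x q_x=1$.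
   Context: $\Phi$ and $\phi$ denote the standard Gaussian CDF and PDF. The quasi-surprisal is $\tilde I(u):=\frac12\big(\phi(\Phi^{-1}(u))/u\big)^2$ for $u\in(0,1)$, so that $u\sqrt{2\tilde I(u)}=\phi(\Phi^{-1}(u))$. *)

theory Defs
  imports "HOL-Probability.Probability"
begin

definition std_normal_cdf :: "real \<Rightarrow> real" where
  "std_normal_cdf x = set_lebesgue_integral lborel {..x} std_normal_density"

definition std_normal_cdf_inv :: "real \<Rightarrow> real" where
  "std_normal_cdf_inv u = (THE x. std_normal_cdf x = u)"

definition quasi_surprisal :: "real \<Rightarrow> real" where
  "quasi_surprisal u = (std_normal_density (std_normal_cdf_inv u) / u)^2 / 2"

definition phi_Phi_inv :: "real \<Rightarrow> real" where
  "phi_Phi_inv u = (if 0 < u \<and> u < 1 then std_normal_density (std_normal_cdf_inv u) else 0)"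

definition prob_simplex :: "('x::finite \<Rightarrow> real) set" where
  "prob_simplex = {p. (\<forall>x. 0 \<le> p x) \<and> (\<Sum>x\<in>UNIV. p x) = 1}"

definition welfare :: "('x::finite \<Rightarrow> real) \<Rightarrow> ('x \<Rightarrow> real) \<Rightarrow> ('x \<Rightarrow> real) \<Rightarrow> real" where
  "welfare \<mu> \<sigma> p = (\<Sum>x\<in>UNIV. p x * \<mu> x + phi_Phi_inv (p x) * \<sigma> x)"

definition strictly_concave_on :: "('x \<Rightarrow> real) set \<Rightarrow> (('x \<Rightarrow> real) \<Rightarrow> real) \<Rightarrow> bool" where
  "strictly_concave_on S f \<longleftrightarrow> (\<forall>p\<in>S. \<forall>q\<in>S. \<forall>t. p \<noteq> q \<and> 0 < t \<and> t < 1 \<longrightarrow>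
      f (\<lambda>x. (1 - t) * p x + t * q x) > (1 - t) * f p + t * f q)"

end

theory Submission
  imports Defs "HOL-Real_Asymp.Real_Asymp"
begin


abbreviation "NM \<equiv> density lborel std_normal_density"

lemma Phi_cdf: "std_normal_cdf x = cdf NM x"
proof -
  have "cdf NM x = measure NM {..x}" by (simp add: cdf_def)
  also have "\<dots> = integral\<^sup>L NM (indicator {..x})"
    by (simp add: measure_def) 
  also have "\<dots> = integral\<^sup>L lborel (\<lambda>y. std_normal_density y *\<^sub>R indicator {..x} y)"
    by (rule integral_density) auto
  also have "\<dots> = std_normal_cdf x"
    unfolding std_normal_cdf_def set_lebesgue_integral_def
    by (simp add: mult.commute)
  finally show ?thesis by simp
qed

interpretation NMd: real_distribution NM
proof -
  have "prob_space NM" by (rule prob_space_normal_density) simp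
  then show "real_distribution NM"
    unfolding real_distribution_def real_distribution_axioms_def by simp
qed

lemma Phi_top: "(std_normal_cdf \<longlongrightarrow> 1) at_top"
  using NMd.cdf_lim_at_top_prob by (simp add: Phi_cdf[abs_def])
lemma Phi_bot: "(std_normal_cdf \<longlongrightarrow> 0) at_bot"
  using NMd.cdf_lim_at_bot by (simp add: Phi_cdf[abs_def])




lemma Phi_LBINT: "std_normal_cdf x = (LBINT y=-\<infinity>..ereal x. std_normal_density y)"
  unfolding std_normal_cdf_def
  by (subst interval_integral_Ioc') (auto intro!: arg_cong2[where f="set_lebesgue_integral lborel"])

lemma int_any: "interval_lebesgue_integrable lborel a b std_normal_density"
  unfolding interval_lebesgue_integrable_def set_integrable_def
  using integrable_mult_indicator[of "einterval a b" lborel std_normal_density] integrable_mult_indicator[of "einterval b a" lborel std_normal_density] by auto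

lemma Phi_split: "std_normal_cdf u = std_normal_cdf 0 + (LBINT y=ereal 0..ereal u. std_normal_density y)"
  unfolding Phi_LBINT
  by (rule interval_integral_sum[symmetric], rule int_any)

lemma Phi_deriv: "(std_normal_cdf has_real_derivative std_normal_density x) (at x)"
proof -
  have c: "continuous_on UNIV std_normal_density"
    unfolding normal_density_def by (intro continuous_intros) auto
  have "((\<lambda>u. LBINT y=ereal 0..ereal u. std_normal_density y) has_vector_derivative std_normal_density x) (at x within {-\<bar>x\<bar>-1..\<bar>x\<bar>+1})"
    by (rule interval_integral_FTC2) (auto intro: continuous_on_subset[OF c])
  then have "((\<lambda>u. LBINT y=ereal 0..ereal u. std_normal_density y) has_vector_derivative std_normal_density x) (at x)"
    by (subst (asm) at_within_Icc_at) auto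
  then have "((\<lambda>u. std_normal_cdf 0 + (LBINT y=ereal 0..ereal u. std_normal_density y)) has_real_derivative std_normal_density x) (at x)"
    by (auto intro!: derivative_eq_intros simp: has_real_derivative_iff_has_vector_derivative)
  then show ?thesis
    by (subst (asm) Phi_split[symmetric, abs_def]) (simp add: zero_ereal_def)
qed




lemma phi_deriv: "(std_normal_density has_real_derivative (- x * std_normal_density x)) (at x)"
  unfolding std_normal_density_def
  by (auto intro!: derivative_eq_intros simp: power2_eq_square field_simps)

lemma phi_pos: "std_normal_density x > 0"
  by (rule normal_density_pos) simp

lemma Phi_strict: "a < b \<Longrightarrow> std_normal_cdf a < std_normal_cdf b"
  by (rule DERIV_pos_imp_increasing) (auto intro: Phi_deriv phi_pos)

lemma Phi_cont: "isCont std_normal_cdf x"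
  using Phi_deriv by (rule DERIV_isCont)

lemma Phi_nonneg: "std_normal_cdf x \<ge> 0"
  by (simp add: Phi_cdf NMd.cdf_nonneg)
lemma Phi_le1: "std_normal_cdf x \<le> 1"
  by (simp add: Phi_cdf NMd.cdf_bounded_prob)

lemma Phi_pos: "std_normal_cdf x > 0"
  using Phi_strict[of "x-1" x] Phi_nonneg[of "x-1"] by simp
lemma Phi_lt1: "std_normal_cdf x < 1"
  using Phi_strict[of x "x+1"] Phi_le1[of "x+1"] by simp

lemma Phi_surj:
  assumes "0 < v" "v < 1" shows "\<exists>x. std_normal_cdf x = v"
proof -
  from Phi_bot assms(1) have "eventually (\<lambda>x. std_normal_cdf x < v) at_bot"
    by (rule order_tendstoD)
  then obtain x1 where x1: "std_normal_cdf x1 < v" by (auto simp: eventually_at_bot_linorder)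
  from Phi_top assms(2) have "eventually (\<lambda>x. std_normal_cdf x > v) at_top"
    by (rule order_tendstoD)
  then obtain x2 where x2: "std_normal_cdf x2 > v" by (auto simp: eventually_at_top_linorder)
  have "x1 \<le> x2" using x1 x2 Phi_strict[of x2 x1] by (cases "x1 \<le> x2") auto
  moreover have "continuous_on {x1..x2} std_normal_cdf"
    using Phi_cont by (simp add: continuous_at_imp_continuous_on)
  ultimately show ?thesis using IVT'[of std_normal_cdf x1 v x2] x1 x2 by auto
qed

lemma Phi_inj: "std_normal_cdf a = std_normal_cdf b \<Longrightarrow> a = b"
  using Phi_strict[of a b] Phi_strict[of b a] by (cases a b rule: linorder_cases) auto

lemma Phi_inv_Phi: "std_normal_cdf_inv (std_normal_cdf b) = b"
  unfolding std_normal_cdf_inv_def by (auto intro: Phi_inj)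

lemma Phi_Phi_inv: "0 < v \<Longrightarrow> v < 1 \<Longrightarrow> std_normal_cdf (std_normal_cdf_inv v) = v"
  using Phi_surj Phi_inv_Phi by metis

lemma G_Phi: "phi_Phi_inv (std_normal_cdf b) = std_normal_density b"
  unfolding phi_Phi_inv_def using Phi_pos Phi_lt1 Phi_inv_Phi by simp

definition hh :: "real \<Rightarrow> real \<Rightarrow> real" where
  "hh a b = std_normal_density b + a * std_normal_cdf b"

lemma hh_deriv: "(hh a has_real_derivative ((a - b) * std_normal_density b)) (at b)"
  unfolding hh_def[abs_def]
  by (auto intro!: derivative_eq_intros phi_deriv Phi_deriv simp: algebra_simps)

lemma hh_inc: assumes "b < c" "c \<le> a" shows "hh a b < hh a c"
proof -
  obtain z where z: "b < z" "z < c" "hh a c - hh a b = (c - b) * ((a - z) * std_normal_density z)"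
    using MVT2[OF assms(1), of "hh a" "\<lambda>b. (a - b) * std_normal_density b"] hh_deriv by blast
  have "0 < (c - b) * ((a - z) * std_normal_density z)"
    using z assms phi_pos[of z] by (intro mult_pos_pos) auto
  then show ?thesis using z by simp
qed

lemma hh_dec: assumes "a \<le> c" "c < b" shows "hh a b < hh a c"
proof -
  obtain z where z: "c < z" "z < b" "hh a b - hh a c = (b - c) * ((a - z) * std_normal_density z)"
    using MVT2[OF assms(2), of "hh a" "\<lambda>b. (a - b) * std_normal_density b"] hh_deriv by blast
  have "0 < (b - c) * ((z - a) * std_normal_density z)"
    using z assms phi_pos[of z] by (intro mult_pos_pos) auto
  then show ?thesis using z by (simp add: algebra_simps)
qed

lemma phi_bot: "(std_normal_density \<longlongrightarrow> 0) at_bot"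
  unfolding std_normal_density_def by real_asymp
lemma phi_top: "(std_normal_density \<longlongrightarrow> 0) at_top"
  unfolding std_normal_density_def by real_asymp

lemma hh_bot: "(hh a \<longlongrightarrow> 0) at_bot"
  unfolding hh_def[abs_def] using tendsto_add[OF phi_bot tendsto_mult[OF tendsto_const Phi_bot, of a]] by simp
lemma hh_top: "(hh a \<longlongrightarrow> a) at_top"
  unfolding hh_def[abs_def] using tendsto_add[OF phi_top tendsto_mult[OF tendsto_const Phi_top, of a]] by simp

lemma hh_max_pos: "0 < hh a a"
proof -
  have "0 \<le> hh a (a - 1)"
  proof (rule tendsto_upperbound[OF hh_bot])
    show "eventually (\<lambda>b. hh a b \<le> hh a (a - 1)) at_bot"
      unfolding eventually_at_bot_linorder
      by (rule exI[of _ "a - 1"]) (auto intro: less_imp_le hh_inc simp: le_less)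
  qed simp
  also have "\<dots> < hh a a" by (rule hh_inc) auto
  finally show ?thesis .
qed

lemma hh_max_gt: "a < hh a a"
proof -
  have "a \<le> hh a (a + 1)"
  proof (rule tendsto_upperbound[OF hh_top])
    show "eventually (\<lambda>b. hh a b \<le> hh a (a + 1)) at_top"
      unfolding eventually_at_top_linorder
      by (rule exI[of _ "a + 1"]) (auto intro: less_imp_le hh_dec simp: le_less)
  qed simp
  also have "\<dots> < hh a a" by (rule hh_dec) auto
  finally show ?thesis .
qed

lemma tangent_strict:
  assumes "0 \<le> v" "v \<le> 1" "v \<noteq> std_normal_cdf a"
  shows "phi_Phi_inv v < std_normal_density a - a * (v - std_normal_cdf a)"
proof -
  consider "v = 0" | "v = 1" | "0 < v \<and> v < 1" using assms by linarith
  then show ?thesis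
  proof cases
    case 1 then show ?thesis using hh_max_pos[of a] by (simp add: hh_def phi_Phi_inv_def)
  next
    case 2 then show ?thesis using hh_max_gt[of a] by (simp add: hh_def phi_Phi_inv_def algebra_simps)
  next
    case 3
    then obtain b where b: "v = std_normal_cdf b" using Phi_surj by blast
    with assms have "b \<noteq> a" by auto
    then have "hh a b < hh a a" using hh_inc[of b a a] hh_dec[of a a b] by (cases "b < a") auto
    then show ?thesis using b by (simp add: G_Phi hh_def algebra_simps)
  qed
qed

lemma tangent:
  assumes "0 \<le> v" "v \<le> 1"
  shows "phi_Phi_inv v \<le> std_normal_density a - a * (v - std_normal_cdf a)"
  using tangent_strict[OF assms, of a] by (cases "v = std_normal_cdf a") (auto simp: G_Phi)





lemma G_concave_strict:
  assumes "0 \<le> a" "a \<le> 1" "0 \<le> b" "b \<le> 1" "a \<noteq> b" "0 < t" "t < 1"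
  shows "(1 - t) * phi_Phi_inv a + t * phi_Phi_inv b < phi_Phi_inv ((1 - t) * a + t * b)"
proof -
  define w where "w = (1 - t) * a + t * b"
  have wa: "w - a = t * (b - a)" and wb: "w - b = (1 - t) * (a - b)" unfolding w_def by (simp_all add: algebra_simps)
  have "w \<noteq> a" "w \<noteq> b" using wa wb assms by auto
  have "min a b < w" "w < max a b"
  proof -
    have "(1 - t) * a + t * b > (1 - t) * min a b + t * min a b"
      using assms by (cases "a < b") (auto intro: add_less_le_mono add_le_less_mono mult_strict_left_mono mult_left_mono)
    then show "min a b < w" unfolding w_def by (simp add: algebra_simps)
    have "(1 - t) * a + t * b < (1 - t) * max a b + t * max a b"
      using assms by (cases "a < b") (auto intro: add_less_le_mono add_le_less_mono mult_strict_left_mono mult_left_mono)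
    then show "w < max a b" unfolding w_def by (simp add: algebra_simps)
  qed
  then have w01: "0 < w" "w < 1" using assms by auto
  define c where "c = std_normal_cdf_inv w"
  have c: "std_normal_cdf c = w" unfolding c_def using Phi_Phi_inv w01 by simp
  have Gw: "phi_Phi_inv w = std_normal_density c" using G_Phi[of c] c by simp
  have 1: "phi_Phi_inv a < std_normal_density c - c * (a - w)"
    using tangent_strict[of a c] assms c \<open>w \<noteq> a\<close> by auto
  have 2: "phi_Phi_inv b < std_normal_density c - c * (b - w)"
    using tangent_strict[of b c] assms c \<open>w \<noteq> b\<close> by auto
  have "(1 - t) * phi_Phi_inv a + t * phi_Phi_inv b <
        (1 - t) * (std_normal_density c - c * (a - w)) + t * (std_normal_density c - c * (b - w))"
    using 1 2 assms by (intro add_strict_mono mult_strict_left_mono) auto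
  also have "\<dots> = std_normal_density c"
    unfolding w_def by (simp add: algebra_simps)
  finally show ?thesis using Gw w_def by simp
qed

lemma simplex_01: "p \<in> prob_simplex \<Longrightarrow> 0 \<le> p x \<and> p x \<le> 1"
proof -
  assume p: "p \<in> prob_simplex"
  then have "p x \<le> (\<Sum>y\<in>UNIV. p y)"
    by (intro member_le_sum) (auto simp: prob_simplex_def)
  with p show ?thesis by (auto simp: prob_simplex_def)
qed

lemma simplex_convex:
  assumes "p \<in> prob_simplex" "q \<in> prob_simplex" "0 \<le> t" "t \<le> 1"
  shows "(\<lambda>x. (1 - t) * p x + t * q x) \<in> prob_simplex"
  using assms unfolding prob_simplex_def
  by (auto simp: sum.distrib sum_distrib_left[symmetric])

lemma welfare_strict_concave:
  assumes sig: "\<forall>x. \<sigma> x > 0"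
  shows "strictly_concave_on prob_simplex (welfare \<mu> \<sigma>)"
  unfolding strictly_concave_on_def
proof (intro ballI allI impI)
  fix p q :: "'a \<Rightarrow> real" and t :: real
  assume p: "p \<in> prob_simplex" and q: "q \<in> prob_simplex" and h: "p \<noteq> q \<and> 0 < t \<and> t < 1"
  obtain x0 where x0: "p x0 \<noteq> q x0" using h by auto
  let ?f = "\<lambda>x. (1 - t) * (p x * \<mu> x + phi_Phi_inv (p x) * \<sigma> x) + t * (q x * \<mu> x + phi_Phi_inv (q x) * \<sigma> x)"
  let ?g = "\<lambda>x. ((1 - t) * p x + t * q x) * \<mu> x + phi_Phi_inv ((1 - t) * p x + t * q x) * \<sigma> x"
  have key: "?g x - ?f x = \<sigma> x * (phi_Phi_inv ((1 - t) * p x + t * q x) - ((1 - t) * phi_Phi_inv (p x) + t * phi_Phi_inv (q x)))" for x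
    by (simp add: algebra_simps)
  have le: "?f x \<le> ?g x" for x
  proof (cases "p x = q x")
    case True then show ?thesis by (simp add: algebra_simps)
  next
    case False
    have "0 < \<sigma> x * (phi_Phi_inv ((1 - t) * p x + t * q x) - ((1 - t) * phi_Phi_inv (p x) + t * phi_Phi_inv (q x)))"
      using G_concave_strict[of "p x" "q x" t] simplex_01[OF p, of x] simplex_01[OF q, of x] False h sig
      by (intro mult_pos_pos) auto
    then show ?thesis using key[of x] by linarith
  qed
  have lt: "?f x0 < ?g x0"
  proof -
    have "0 < \<sigma> x0 * (phi_Phi_inv ((1 - t) * p x0 + t * q x0) - ((1 - t) * phi_Phi_inv (p x0) + t * phi_Phi_inv (q x0)))"
      using G_concave_strict[of "p x0" "q x0" t] simplex_01[OF p, of x0] simplex_01[OF q, of x0] x0 h sig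
      by (intro mult_pos_pos) auto
    then show ?thesis using key[of x0] by linarith
  qed
  have "(1 - t) * welfare \<mu> \<sigma> p + t * welfare \<mu> \<sigma> q = sum ?f UNIV"
    unfolding welfare_def by (simp add: sum_distrib_left sum.distrib distrib_left)
  also have "\<dots> < sum ?g UNIV"
    by (rule sum_strict_mono_ex1) (use le lt in auto)
  also have "\<dots> = welfare \<mu> \<sigma> (\<lambda>x. (1 - t) * p x + t * q x)"
    unfolding welfare_def by simp
  finally show "(1 - t) * welfare \<mu> \<sigma> p + t * welfare \<mu> \<sigma> q < welfare \<mu> \<sigma> (\<lambda>x. (1 - t) * p x + t * q x)" .
qed

lemma q_max:
  fixes \<mu> \<sigma> :: "'x::finite \<Rightarrow> real"
  assumes sig: "\<forall>x. \<sigma> x > 0"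
    and k: "(\<Sum>x\<in>UNIV. std_normal_cdf ((\<mu> x - \<kappa>) / \<sigma> x)) = 1"
    and p': "p' \<in> prob_simplex"
  shows "welfare \<mu> \<sigma> p' \<le> welfare \<mu> \<sigma> (\<lambda>x. std_normal_cdf ((\<mu> x - \<kappa>) / \<sigma> x))"
proof -
  let ?a = "\<lambda>x. (\<mu> x - \<kappa>) / \<sigma> x"
  let ?q = "\<lambda>x. std_normal_cdf (?a x)"
  have trm: "p' x * \<mu> x + phi_Phi_inv (p' x) * \<sigma> x \<le> ?q x * \<mu> x + phi_Phi_inv (?q x) * \<sigma> x + \<kappa> * (p' x - ?q x)" for x
  proof -
    have t: "phi_Phi_inv (p' x) \<le> std_normal_density (?a x) - ?a x * (p' x - ?q x)"
      using tangent simplex_01[OF p'] by blast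
    have "\<sigma> x * phi_Phi_inv (p' x) \<le> \<sigma> x * (std_normal_density (?a x) - ?a x * (p' x - ?q x))"
      using t sig by (intro mult_left_mono) (auto simp: less_imp_le)
    also have "\<dots> = \<sigma> x * std_normal_density (?a x) - (\<mu> x - \<kappa>) * (p' x - ?q x)"
    proof -
      have sx: "\<sigma> x \<noteq> 0" using sig by (metis less_irrefl)
      then show ?thesis by (simp add: field_simps)
    qed
    finally show ?thesis by (simp add: G_Phi algebra_simps)
  qed
  have "welfare \<mu> \<sigma> p' \<le> (\<Sum>x\<in>UNIV. ?q x * \<mu> x + phi_Phi_inv (?q x) * \<sigma> x + \<kappa> * (p' x - ?q x))"
    unfolding welfare_def by (rule sum_mono) (rule trm)
  also have "\<dots> = welfare \<mu> \<sigma> ?q + \<kappa> * ((\<Sum>x\<in>UNIV. p' x) - (\<Sum>x\<in>UNIV. ?q x))"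
  proof -
    have "(\<Sum>x\<in>UNIV. \<kappa> * (p' x - ?q x)) = \<kappa> * ((\<Sum>x\<in>UNIV. p' x) - (\<Sum>x\<in>UNIV. ?q x))"
      by (simp add: right_diff_distrib sum_subtractf sum_distrib_left)
    then show ?thesis unfolding welfare_def by (simp add: sum.distrib)
  qed
  also have "\<dots> = welfare \<mu> \<sigma> ?q"
    using p' k by (simp add: prob_simplex_def)
  finally show ?thesis .
qed




lemma Phi_cont_on[continuous_intros]:
  "continuous_on S f \<Longrightarrow> continuous_on S (\<lambda>x. std_normal_cdf (f x))"
  by (rule continuous_on_compose2[of UNIV std_normal_cdf]) (auto simp: continuous_at_imp_continuous_on Phi_cont)

lemma kappa_exists:
  fixes \<mu> \<sigma> :: "'x::finite \<Rightarrow> real"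
  assumes card: "CARD('x) \<ge> 2" and sig: "\<forall>x. \<sigma> x > 0"
  shows "\<exists>\<kappa>. (\<Sum>x\<in>UNIV. std_normal_cdf ((\<mu> x - \<kappa>) / \<sigma> x)) = 1"
proof -
  define F where "F = (\<lambda>\<kappa>. \<Sum>x\<in>UNIV. std_normal_cdf ((\<mu> x - \<kappa>) / \<sigma> x))"
  have Fc: "continuous_on S F" for S
  proof -
    have "\<sigma> x \<noteq> 0" for x using sig by (metis less_irrefl)
    then show ?thesis unfolding F_def by (intro continuous_intros) auto
  qed
  have cpos: "real CARD('x) > 0" using card by simp
  from Phi_top have "eventually (\<lambda>t. std_normal_cdf t > 1/2) at_top"
    by (rule order_tendstoD) simp
  then obtain T where T: "\<And>t. t \<ge> T \<Longrightarrow> std_normal_cdf t > 1/2" by (auto simp: eventually_at_top_linorder)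
  from Phi_bot have "eventually (\<lambda>t. std_normal_cdf t < 1 / real CARD('x)) at_bot"
    by (rule order_tendstoD) (use cpos in simp)
  then obtain T' where T': "\<And>t. t \<le> T' \<Longrightarrow> std_normal_cdf t < 1 / real CARD('x)" by (auto simp: eventually_at_bot_linorder)
  define k2 where "k2 = Min (range (\<lambda>x. \<mu> x - T * \<sigma> x))"
  define k1 where "k1 = Max (range (\<lambda>x. \<mu> x - T' * \<sigma> x))"
  have "F k2 \<ge> 1"
  proof -
    have "(\<Sum>x::'x\<in>UNIV. (1/2::real)) \<le> F k2"
      unfolding F_def
    proof (rule sum_mono)
      fix x :: 'x
      have "k2 \<le> \<mu> x - T * \<sigma> x" unfolding k2_def by (rule Min_le) auto
      then have "T \<le> (\<mu> x - k2) / \<sigma> x" using sig by (simp add: pos_le_divide_eq)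
      then show "1/2 \<le> std_normal_cdf ((\<mu> x - k2) / \<sigma> x)" using T by (simp add: less_imp_le)
    qed
    then show ?thesis using card by simp
  qed
  moreover have "F k1 \<le> 1"
  proof -
    have "F k1 \<le> (\<Sum>x::'x\<in>UNIV. 1 / real CARD('x))"
      unfolding F_def
    proof (rule sum_mono)
      fix x :: 'x
      have "\<mu> x - T' * \<sigma> x \<le> k1" unfolding k1_def by (rule Max_ge) auto
      then have "(\<mu> x - k1) / \<sigma> x \<le> T'" using sig by (simp add: pos_divide_le_eq)
      then show "std_normal_cdf ((\<mu> x - k1) / \<sigma> x) \<le> 1 / real CARD('x)" using T' by (simp add: less_imp_le)
    qed
    then show ?thesis using cpos by simp
  qed
  ultimately have "\<exists>k. F k = 1"
  proof (cases "k1 \<le> k2")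
    case True
    then show ?thesis using IVT'[of F k1 1 k2] Fc \<open>F k2 \<ge> 1\<close> \<open>F k1 \<le> 1\<close> by auto
  next
    case False
    then show ?thesis using IVT2'[of F k1 1 k2] Fc \<open>F k2 \<ge> 1\<close> \<open>F k1 \<le> 1\<close> by auto
  qed
  then show ?thesis unfolding F_def .
qed




lemma aux_lin: "(1 - 1/2) * a + 1/2 * b < (c::real) \<Longrightarrow> b \<le> a \<Longrightarrow> a \<le> b \<Longrightarrow> c \<le> b \<Longrightarrow> False"
  by (simp add: field_simps)
theorem proposition4:
  fixes \<mu> \<sigma> :: "'x::finite \<Rightarrow> real"
  assumes "CARD('x) \<ge> 2"
    and "\<forall>x. \<sigma> x > 0"
  shows "strictly_concave_on prob_simplex (welfare \<mu> \<sigma>)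
    \<and> (\<exists>\<kappa>. (\<Sum>x\<in>UNIV. std_normal_cdf ((\<mu> x - \<kappa>) / \<sigma> x)) = 1)
    \<and> (\<forall>\<kappa>. (\<Sum>x\<in>UNIV. std_normal_cdf ((\<mu> x - \<kappa>) / \<sigma> x)) = 1 \<longrightarrow>
         {p \<in> prob_simplex. \<forall>p'\<in>prob_simplex. welfare \<mu> \<sigma> p' \<le> welfare \<mu> \<sigma> p}
           = {(\<lambda>x. std_normal_cdf ((\<mu> x - \<kappa>) / \<sigma> x))})"
proof (intro conjI allI impI)
  show sc: "strictly_concave_on prob_simplex (welfare \<mu> \<sigma>)"
    using assms(2) by (rule welfare_strict_concave)
  show "\<exists>\<kappa>. (\<Sum>x\<in>UNIV. std_normal_cdf ((\<mu> x - \<kappa>) / \<sigma> x)) = 1"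
    by (rule kappa_exists[OF assms])
  fix \<kappa>
  assume k: "(\<Sum>x\<in>UNIV. std_normal_cdf ((\<mu> x - \<kappa>) / \<sigma> x)) = 1"
  define q where "q = (\<lambda>x. std_normal_cdf ((\<mu> x - \<kappa>) / \<sigma> x))"
  have qS: "q \<in> prob_simplex" unfolding prob_simplex_def q_def by (simp add: Phi_nonneg k)
  have qmax: "\<forall>p'\<in>prob_simplex. welfare \<mu> \<sigma> p' \<le> welfare \<mu> \<sigma> q"
    unfolding q_def by (intro ballI q_max[OF assms(2) k])
  have uniq: "p = q" if pS: "p \<in> prob_simplex" and pmax: "\<forall>p'\<in>prob_simplex. welfare \<mu> \<sigma> p' \<le> welfare \<mu> \<sigma> p" for p
  proof (rule ccontr)
    assume "p \<noteq> q"
    let ?m = "\<lambda>x. (1 - 1/2) * p x + (1/2) * q x"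
    have mS: "?m \<in> prob_simplex" by (rule simplex_convex[OF pS qS]) auto
    have f1: "(1 - 1/2) * welfare \<mu> \<sigma> p + (1/2) * welfare \<mu> \<sigma> q < welfare \<mu> \<sigma> ?m"
      using sc[unfolded strictly_concave_on_def, rule_format, of p q "1/2"] pS qS \<open>p \<noteq> q\<close> by simp
    have f2: "welfare \<mu> \<sigma> q \<le> welfare \<mu> \<sigma> p" using pmax qS by blast
    have f3: "welfare \<mu> \<sigma> p \<le> welfare \<mu> \<sigma> q" using qmax pS by blast
    have f4: "welfare \<mu> \<sigma> ?m \<le> welfare \<mu> \<sigma> q" using qmax mS by blast
    show False by (rule aux_lin[OF f1 f2 f3 f4])
  qed
  show "{p \<in> prob_simplex. \<forall>p'\<in>prob_simplex. welfare \<mu> \<sigma> p' \<le> welfare \<mu> \<sigma> p}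
           = {(\<lambda>x. std_normal_cdf ((\<mu> x - \<kappa>) / \<sigma> x))}"
    unfolding q_def[symmetric] using qS qmax uniq by blast
qed



end
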